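(* Let $\mathcal{D}$ be a probability distribution on $\mathcal{X}\times\mathcal{Y}$ with $\mathcal{Y}=\{1,\dots,K\}$, and let $\rho$ be a probability distribution over classifiers $h:\mathcal{X}\to\mathcal{Y}$. Let $W_\rho=W_\rho(X,Y)=\mathbb{E}_{h\sim\rho}[\mathbb{1}(h(X)\neq Y)]$ for $(X,Y)\sim\mathcal{D}$, and $\bar W_\rho=1-W_\rho$. Suppose $\rho$ is competent, i.e. for every $0\le t\le 1/2$, $$\mathbb{P}_{\mathcal{D}}\big(W_\rho\in[t,1/2)\big)\;\ge\;\mathbb{P}_{\mathcal{D}}\big(W_\rho\in[1/2,1-t]\big).$$ Then for any increasing function $h:[0,1]\to\mathbb{R}$ with $h(0)=0$, $$\mathbb{E}_{\mathcal{D}}\big[h(W_\rho)\mathbb{1}_{W_\rho<1/2}\big]\;\ge\;\mathbb{E}_{\mathcal{D}}\big[h(\bar W_\rho)\mathbb{1}_{\bar W_\rho\le 1/2}\big].$$ *)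

theory Defs
  imports "HOL-Probability.Probability"
begin

definition W_rho :: "('x \<Rightarrow> nat) measure \<Rightarrow> 'x \<times> nat \<Rightarrow> real" where
  "W_rho \<rho> z = (LINT h|\<rho>. (if h (fst z) \<noteq> snd z then 1 else 0))"

definition competent :: "('x \<times> nat) measure \<Rightarrow> ('x \<Rightarrow> nat) measure \<Rightarrow> bool" where
  "competent D \<rho> \<longleftrightarrow>
     (\<forall>t. 0 \<le> t \<and> t \<le> 1/2 \<longrightarrow>
        measure D {z \<in> space D. W_rho \<rho> z \<in> {t..<1/2}}
          \<ge> measure D {z \<in> space D. W_rho \<rho> z \<in> {1/2..1-t}})"

end

theory Submission
  imports Defs
begin

lemma compA:
  assumes "prob_space D" "w \<in> borel_measurable D"
    and comp: "\<forall>t. 0 \<le> t \<and> t \<le> 1/2 \<longrightarrow>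
        measure D {z \<in> space D. w z \<in> {t..<1/2}} \<ge> measure D {z \<in> space D. w z \<in> {1/2..1-t}}"
    and "(t::real) \<ge> 0"
  shows "measure D {z \<in> space D. w z \<in> {t..<1/2}} \<ge> measure D {z \<in> space D. w z \<in> {1/2..1-t}}"
proof (cases "t \<le> 1/2")
  case True then show ?thesis using comp assms(4) by blast
next
  case False
  then have "{z \<in> space D. w z \<in> {1/2..1-t}} = {}" by auto
  then show ?thesis by (metis measure_empty measure_nonneg)
qed

lemma compB:
  assumes "prob_space D" and [measurable]: "w \<in> borel_measurable D"
    and comp: "\<forall>t. 0 \<le> t \<and> t \<le> 1/2 \<longrightarrow>
        measure D {z \<in> space D. w z \<in> {t..<1/2}} \<ge> measure D {z \<in> space D. w z \<in> {1/2..1-t}}"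
    and t: "(t::real) \<ge> 0"
  shows "measure D {z \<in> space D. w z \<in> {t<..<1/2}} \<ge> measure D {z \<in> space D. w z \<in> {1/2..<1-t}}"
proof -
  interpret prob_space D by fact
  define A where "A n = {z \<in> space D. w z \<in> {t + 1/Suc n..<1/2}}" for n
  define B where "B n = {z \<in> space D. w z \<in> {1/2..1-(t + 1/Suc n)}}" for n
  have fr: "1/real (Suc n) \<le> 1/ real (Suc m)" if "m \<le> n" for m n
    using that by (simp add: frac_le)
  have incA: "incseq A" unfolding A_def incseq_def
  proof (intro allI impI subsetI)
    fix m n z assume "m \<le> n" "z \<in> {z \<in> space D. w z \<in> {t + 1/Suc m..<1/2}}"
    with fr[of m n] show "z \<in> {z \<in> space D. w z \<in> {t + 1/Suc n..<1/2}}" by auto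
  qed
  have incB: "incseq B" unfolding B_def incseq_def
  proof (intro allI impI subsetI)
    fix m n z assume "m \<le> n" "z \<in> {z \<in> space D. w z \<in> {1/2..1-(t + 1/Suc m)}}"
    with fr[of m n] show "z \<in> {z \<in> space D. w z \<in> {1/2..1-(t + 1/Suc n)}}" by auto
  qed
  have UA: "(\<Union>n. A n) = {z \<in> space D. w z \<in> {t<..<1/2}}"
  proof (intro set_eqI iffI)
    fix z assume "z \<in> (\<Union>n. A n)" then show "z \<in> {z \<in> space D. w z \<in> {t<..<1/2}}"
      unfolding A_def by auto (smt (verit) of_nat_0_le_iff divide_pos_pos)
  next
    fix z assume z: "z \<in> {z \<in> space D. w z \<in> {t<..<1/2}}"
    then obtain n where "inverse (real (Suc n)) < w z - t" using reals_Archimedean[of "w z - t"] by auto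
    then have "1 / Suc n < w z - t" by (simp add: inverse_eq_divide)
    then show "z \<in> (\<Union>n. A n)" using z unfolding A_def by (auto intro!: exI[of _ n])
  qed
  have UB: "(\<Union>n. B n) = {z \<in> space D. w z \<in> {1/2..<1-t}}"
  proof (intro set_eqI iffI)
    fix z assume "z \<in> (\<Union>n. B n)" then show "z \<in> {z \<in> space D. w z \<in> {1/2..<1-t}}"
      unfolding B_def by auto (smt (verit) of_nat_0_le_iff divide_pos_pos)
  next
    fix z assume z: "z \<in> {z \<in> space D. w z \<in> {1/2..<1-t}}"
    then obtain n where "inverse (real (Suc n)) < 1 - t - w z" using reals_Archimedean[of "1 - t - w z"] by auto
    then have "1 / Suc n < 1 - t - w z" by (simp add: inverse_eq_divide)
    then show "z \<in> (\<Union>n. B n)" using z unfolding B_def by (auto intro!: exI[of _ n])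
  qed
  have "(\<lambda>n. measure D (A n)) \<longlonglongrightarrow> measure D (\<Union>n. A n)"
    by (rule finite_Lim_measure_incseq[OF _ incA]) (auto simp: A_def)
  moreover have "(\<lambda>n. measure D (B n)) \<longlonglongrightarrow> measure D (\<Union>n. B n)"
    by (rule finite_Lim_measure_incseq[OF _ incB]) (auto simp: B_def)
  moreover have "measure D (B n) \<le> measure D (A n)" for n
    unfolding A_def B_def
    by (rule compA[OF assms(1,2) comp]) (use t in auto)
  ultimately have "measure D (\<Union>n. B n) \<le> measure D (\<Union>n. A n)"
    by (intro LIMSEQ_le) auto
  then show ?thesis using UA UB by simp
qed

lemma level:
  assumes "prob_space D" and [measurable]: "w \<in> borel_measurable D"
    and comp: "\<forall>t. 0 \<le> t \<and> t \<le> 1/2 \<longrightarrow>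
        measure D {z \<in> space D. w z \<in> {t..<1/2}} \<ge> measure D {z \<in> space D. w z \<in> {1/2..1-t}}"
    and w01: "\<And>z. z \<in> space D \<Longrightarrow> 0 \<le> w z \<and> w z \<le> 1"
    and mono: "mono_on {0..1} (g::real\<Rightarrow>real)"
  shows "measure D {z \<in> space D. 1/2 \<le> w z \<and> s < g (1 - w z)}
       \<le> measure D {z \<in> space D. w z < 1/2 \<and> s < g (w z)}"
proof -
  define S where "S = {u \<in> {0..1/2}. s < (g u::real)}"
  have gmono: "g a \<le> g b" if "0 \<le> a" "a \<le> b" "b \<le> 1" for a b
    using mono that by (auto simp: mono_on_def)
  show ?thesis
  proof (cases "S = {}")
    case True
    have "{z \<in> space D. 1/2 \<le> w z \<and> s < g (1 - w z)} = {}"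
    proof (rule ccontr)
      assume "{z \<in> space D. 1/2 \<le> w z \<and> s < g (1 - w z)} \<noteq> {}"
      then obtain z where "z \<in> space D" "1/2 \<le> w z" "s < g (1 - w z)" by auto
      then have "1 - w z \<in> S" using w01[of z] by (auto simp: S_def)
      then show False using True by auto
    qed
    then show ?thesis by (metis measure_empty measure_nonneg)
  next
    case False
    define t where "t = Inf S"
    have bdd: "bdd_below S" unfolding S_def by (rule bdd_belowI[of _ 0]) auto
    have tS: "t \<le> u" if "u \<in> S" for u using cInf_lower[OF that bdd] t_def by simp
    have t0: "0 \<le> t" unfolding t_def using False by (intro cInf_greatest) (auto simp: S_def)
    obtain u0 where u0: "u0 \<in> S" using False by auto
    have th: "t \<le> 1/2" using tS[OF u0] u0 by (auto simp: S_def)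
    show ?thesis
    proof (cases "t \<in> S")
      case True
      have gt: "s < g t" using True by (auto simp: S_def)
      have e1: "{z \<in> space D. w z < 1/2 \<and> s < g (w z)} = {z \<in> space D. w z \<in> {t..<1/2}}"
      proof (intro set_eqI iffI)
        fix z assume z: "z \<in> {z \<in> space D. w z < 1/2 \<and> s < g (w z)}"
        then have "w z \<in> S" using w01 by (auto simp: S_def)
        then show "z \<in> {z \<in> space D. w z \<in> {t..<1/2}}" using tS z by auto
      next
        fix z assume z: "z \<in> {z \<in> space D. w z \<in> {t..<1/2}}"
        then have "g t \<le> g (w z)" using t0 by (intro gmono) auto
        then show "z \<in> {z \<in> space D. w z < 1/2 \<and> s < g (w z)}" using z gt by auto
      qed
      have e2: "{z \<in> space D. 1/2 \<le> w z \<and> s < g (1 - w z)} = {z \<in> space D. w z \<in> {1/2..1-t}}"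
      proof (intro set_eqI iffI)
        fix z assume z: "z \<in> {z \<in> space D. 1/2 \<le> w z \<and> s < g (1 - w z)}"
        then have "1 - w z \<in> S" using w01 by (auto simp: S_def)
        then show "z \<in> {z \<in> space D. w z \<in> {1/2..1-t}}" using tS[of "1 - w z"] z by auto
      next
        fix z assume z: "z \<in> {z \<in> space D. w z \<in> {1/2..1-t}}"
        then have "g t \<le> g (1 - w z)" using t0 by (intro gmono) auto
        then show "z \<in> {z \<in> space D. 1/2 \<le> w z \<and> s < g (1 - w z)}" using z gt by auto
      qed
      show ?thesis unfolding e1 e2 by (rule compA[OF assms(1,2) comp t0])
    next
      case nt: False
      have lt: "\<exists>u\<in>S. u < v" if "t < v" for v
        using that False unfolding t_def by (simp add: cInf_less_iff bdd)
      have e1: "{z \<in> space D. w z < 1/2 \<and> s < g (w z)} = {z \<in> space D. w z \<in> {t<..<1/2}}"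
      proof (intro set_eqI iffI)
        fix z assume z: "z \<in> {z \<in> space D. w z < 1/2 \<and> s < g (w z)}"
        then have "w z \<in> S" using w01 by (auto simp: S_def)
        then show "z \<in> {z \<in> space D. w z \<in> {t<..<1/2}}" using tS[of "w z"] nt z
          by (cases "w z = t") auto
      next
        fix z assume z: "z \<in> {z \<in> space D. w z \<in> {t<..<1/2}}"
        then obtain u where u: "u \<in> S" "u < w z" using lt by auto
        then have "g u \<le> g (w z)" using z by (intro gmono) (auto simp: S_def)
        then show "z \<in> {z \<in> space D. w z < 1/2 \<and> s < g (w z)}" using z u by (auto simp: S_def)
      qed
      have e2: "{z \<in> space D. 1/2 \<le> w z \<and> s < g (1 - w z)} = {z \<in> space D. w z \<in> {1/2..<1-t}}"
      proof (intro set_eqI iffI)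
        fix z assume z: "z \<in> {z \<in> space D. 1/2 \<le> w z \<and> s < g (1 - w z)}"
        then have "1 - w z \<in> S" using w01 by (auto simp: S_def)
        then show "z \<in> {z \<in> space D. w z \<in> {1/2..<1-t}}" using tS[of "1 - w z"] nt z
          by (cases "1 - w z = t") auto
      next
        fix z assume z: "z \<in> {z \<in> space D. w z \<in> {1/2..<1-t}}"
        then obtain u where u: "u \<in> S" "u < 1 - w z" using lt[of "1 - w z"] by auto
        then have "g u \<le> g (1 - w z)" using z w01 by (intro gmono) (auto simp: S_def)
        then show "z \<in> {z \<in> space D. 1/2 \<le> w z \<and> s < g (1 - w z)}" using z u by (auto simp: S_def)
      qed
      show ?thesis unfolding e1 e2 by (rule compB[OF assms(1,2) comp t0])
    qed
  qed
qed


theorem lemma2: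
  fixes D :: "('x \<times> nat) measure" and \<rho> :: "('x \<Rightarrow> nat) measure"
    and K :: nat and g :: "real \<Rightarrow> real"
  assumes "prob_space D"
    and "space D \<subseteq> UNIV \<times> {1..K}"
    and "prob_space \<rho>"
    and "\<forall>h\<in>space \<rho>. \<forall>x. h x \<in> {1..K}"
    and "\<forall>x y. {h \<in> space \<rho>. h x \<noteq> y} \<in> sets \<rho>"
    and "W_rho \<rho> \<in> borel_measurable D"
    and "competent D \<rho>"
    and "mono_on {0..1} g" and "g 0 = 0"
  shows "(LINT z|D. g (W_rho \<rho> z) * indicator {w. w < 1/2} (W_rho \<rho> z))
       \<ge> (LINT z|D. g (1 - W_rho \<rho> z) * indicator {w. w \<le> 1/2} (1 - W_rho \<rho> z))"
proof -
  interpret D: prob_space D by fact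
  interpret R: prob_space \<rho> by fact
  define w where "w = W_rho \<rho>"
  have wm[measurable]: "w \<in> borel_measurable D" using assms(6) by (simp add: w_def)
  have comp: "\<forall>t. 0 \<le> t \<and> t \<le> 1/2 \<longrightarrow>
        measure D {z \<in> space D. w z \<in> {t..<1/2}} \<ge> measure D {z \<in> space D. w z \<in> {1/2..1-t}}"
    using assms(7) by (simp add: competent_def w_def)
  have w01: "0 \<le> w z \<and> w z \<le> 1" for z
  proof -
    let ?f = "\<lambda>h. (if h (fst z) \<noteq> snd z then 1 else 0) :: real"
    have "0 \<le> integral\<^sup>L \<rho> ?f" by (simp add: integral_nonneg)
    moreover have "integral\<^sup>L \<rho> ?f \<le> 1"
    proof (cases "integrable \<rho> ?f")
      case True
      then have "integral\<^sup>L \<rho> ?f \<le> integral\<^sup>L \<rho> (\<lambda>_. 1::real)"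
        by (intro integral_mono) auto
      then show ?thesis by (simp add: R.prob_space)
    next
      case False then show ?thesis by (simp add: not_integrable_integral_eq)
    qed
    ultimately show ?thesis by (simp add: w_def W_rho_def)
  qed
  have gmono: "g a \<le> g b" if "0 \<le> a" "a \<le> b" "b \<le> 1" for a b
    using assms(8) that by (auto simp: mono_on_def)
  have g0: "0 \<le> g u" "g u \<le> g 1" if "0 \<le> u" "u \<le> 1" for u
    using gmono[of 0 u] gmono[of u 1] that assms(9) by auto
  have wr: "w \<in> measurable D (restrict_space borel {0..1})"
    by (rule measurable_restrict_space2) (use w01 in auto)
  have wr': "(\<lambda>z. 1 - w z) \<in> measurable D (restrict_space borel {0..1})"
    by (rule measurable_restrict_space2) (use w01 in auto)
  have gw[measurable]: "(\<lambda>z. g (w z)) \<in> borel_measurable D"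
    using measurable_compose[OF wr borel_measurable_mono_on_fnc[OF assms(8)]] .
  have gw'[measurable]: "(\<lambda>z. g (1 - w z)) \<in> borel_measurable D"
    using measurable_compose[OF wr' borel_measurable_mono_on_fnc[OF assms(8)]] .
  define f1 where "f1 z = g (w z) * indicator {w. w < 1/2} (w z)" for z
  define f2 where "f2 z = g (1 - w z) * indicator {w. w \<le> 1/2} (1 - w z)" for z
  have f1m[measurable]: "f1 \<in> borel_measurable D" unfolding f1_def by measurable
  have f2m[measurable]: "f2 \<in> borel_measurable D" unfolding f2_def by measurable
  have f1nn: "0 \<le> f1 z" "f1 z \<le> g 1" for z using g0[of "w z"] w01[of z] by (auto simp: f1_def indicator_def)
  have f2nn: "0 \<le> f2 z" "f2 z \<le> g 1" for z using g0[of "1 - w z"] w01[of z] by (auto simp: f2_def indicator_def)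
  have int1: "integrable D f1"
    by (rule D.integrable_const_bound[where B="g 1"]) (use f1nn in auto)
  have int2: "integrable D f2"
    by (rule D.integrable_const_bound[where B="g 1"]) (use f2nn in auto)
  have lc: "(\<integral>\<^sup>+z. ennreal (f z) \<partial>D) = (\<integral>\<^sup>+s. emeasure D {z \<in> space D. 0 \<le> s \<and> s < f z} \<partial>lborel)"
    if fm[measurable]: "f \<in> borel_measurable D" and fnn: "\<And>z. 0 \<le> f z" for f
  proof -
    have "(\<integral>\<^sup>+z. ennreal (f z) \<partial>D) = (\<integral>\<^sup>+z. (\<integral>\<^sup>+s. indicator {z \<in> space D. 0 \<le> s \<and> s < f z} z \<partial>lborel) \<partial>D)"
    proof (rule nn_integral_cong)
      fix z assume z: "z \<in> space D"
      have "(\<integral>\<^sup>+s. indicator {z \<in> space D. 0 \<le> s \<and> s < f z} z \<partial>lborel) = (\<integral>\<^sup>+s. indicator {0..<f z} s \<partial>lborel)"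
        using z by (intro nn_integral_cong) (auto simp: indicator_def)
      also have "\<dots> = ennreal (f z)" using fnn[of z] by simp
      finally show "ennreal (f z) = (\<integral>\<^sup>+s. indicator {z \<in> space D. 0 \<le> s \<and> s < f z} z \<partial>lborel)" by simp
    qed
    also have "\<dots> = (\<integral>\<^sup>+s. (\<integral>\<^sup>+z. indicator {z \<in> space D. 0 \<le> s \<and> s < f z} z \<partial>D) \<partial>lborel)"
    proof (rule pair_sigma_finite.Fubini'[symmetric])
      show "pair_sigma_finite D lborel" by unfold_locales
      have "{p \<in> space (D \<Otimes>\<^sub>M lborel). 0 \<le> snd p \<and> snd p < f (fst p)} \<in> sets (D \<Otimes>\<^sub>M lborel)"
        by measurable
      then have "(\<lambda>p. indicator {p \<in> space (D \<Otimes>\<^sub>M lborel). 0 \<le> snd p \<and> snd p < f (fst p)} p :: ennreal) \<in> borel_measurable (D \<Otimes>\<^sub>M lborel)"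
        by (rule borel_measurable_indicator)
      then show "case_prod (\<lambda>z s. indicator {z \<in> space D. 0 \<le> s \<and> s < f z} z :: ennreal) \<in> borel_measurable (D \<Otimes>\<^sub>M lborel)"
        by (rule measurable_cong[THEN iffD1, rotated]) (auto simp: indicator_def space_pair_measure)
    qed
    also have "\<dots> = (\<integral>\<^sup>+s. emeasure D {z \<in> space D. 0 \<le> s \<and> s < f z} \<partial>lborel)"
      by (intro nn_integral_cong nn_integral_indicator) measurable
    finally show ?thesis .
  qed
  have "(\<integral>\<^sup>+z. ennreal (f2 z) \<partial>D) \<le> (\<integral>\<^sup>+z. ennreal (f1 z) \<partial>D)"
    unfolding lc[OF f1m f1nn(1)] lc[OF f2m f2nn(1)]
  proof (rule nn_integral_mono)
    fix s :: real
    show "emeasure D {z \<in> space D. 0 \<le> s \<and> s < f2 z} \<le> emeasure D {z \<in> space D. 0 \<le> s \<and> s < f1 z}"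
    proof (cases "0 \<le> s")
      case False then show ?thesis by simp
    next
      case True
      have e1: "{z \<in> space D. 0 \<le> s \<and> s < f1 z} = {z \<in> space D. w z < 1/2 \<and> s < g (w z)}"
        using True by (auto simp: f1_def indicator_def)
      have e2: "{z \<in> space D. 0 \<le> s \<and> s < f2 z} = {z \<in> space D. 1/2 \<le> w z \<and> s < g (1 - w z)}"
        using True by (auto simp: f2_def indicator_def)
      have "measure D {z \<in> space D. 1/2 \<le> w z \<and> s < g (1 - w z)}
          \<le> measure D {z \<in> space D. w z < 1/2 \<and> s < g (w z)}"
        by (rule level[OF assms(1) wm comp _ assms(8)]) (use w01 in auto)
      then show ?thesis unfolding e1 e2 by (simp add: D.emeasure_eq_measure)
    qed
  qed
  moreover have "(\<integral>\<^sup>+z. ennreal (f1 z) \<partial>D) = ennreal (integral\<^sup>L D f1)"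
    by (rule nn_integral_eq_integral[OF int1]) (use f1nn in auto)
  moreover have "(\<integral>\<^sup>+z. ennreal (f2 z) \<partial>D) = ennreal (integral\<^sup>L D f2)"
    by (rule nn_integral_eq_integral[OF int2]) (use f2nn in auto)
  moreover have "0 \<le> integral\<^sup>L D f1" by (simp add: integral_nonneg f1nn)
  ultimately have "integral\<^sup>L D f2 \<le> integral\<^sup>L D f1" by (simp add: ennreal_le_iff)
  then show ?thesis unfolding f1_def[abs_def] f2_def[abs_def] w_def by simp
qed

end
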